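(* Every $2$-transitive affine permutation group of degree at least $3$ contains a quasi-semiregular element.
   Context: An affine permutation group is a subgroup $G=VG_0\le\mathrm{AGL}(d,q)$ containing the translation group $V=\mathbb F_q^d$, acting on $V$. A permutation $g$ is quasi-semiregular if $\langle g\rangle$ has a unique fixed point and acts semiregularly (only the identity fixes a point) on the remaining points. *)

theory Defs
  imports "HOL-Analysis.Analysis"
begin

text \<open>V = F_q^d is modelled as 'f ^ 'd with 'f a finite field and 'd a finite index type
(d = CARD('d)). AGL(d,q) = maps x |-> A x + b with A an invertible d x d matrix over F_q.\<close>

definition AGL :: "(('f::{finite,field}) ^ 'd \<Rightarrow> 'f ^ 'd) set" where
  "AGL = {g. \<exists>(A::'f^'d^'d) b. invertible A \<and> (\<forall>x. g x = A *v x + b)}"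

definition translation :: "('f::{finite,field}) ^ 'd \<Rightarrow> 'f ^ 'd \<Rightarrow> 'f ^ 'd" where
  "translation b = (\<lambda>x. x + b)"

definition perm_group :: "('a \<Rightarrow> 'a) set \<Rightarrow> bool" where
  "perm_group G \<longleftrightarrow> id \<in> G \<and> (\<forall>g\<in>G. bij g) \<and> (\<forall>g\<in>G. \<forall>h\<in>G. g \<circ> h \<in> G)
     \<and> (\<forall>g\<in>G. inv g \<in> G)"

definition affine_perm_group :: "(('f::{finite,field}) ^ 'd \<Rightarrow> 'f ^ 'd) set \<Rightarrow> bool" where
  "affine_perm_group G \<longleftrightarrow> perm_group G \<and> G \<subseteq> AGL \<and> range translation \<subseteq> G"

definition two_transitive :: "('a \<Rightarrow> 'a) set \<Rightarrow> bool" where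
  "two_transitive G \<longleftrightarrow> (\<forall>x1 x2 y1 y2. x1 \<noteq> x2 \<longrightarrow> y1 \<noteq> y2 \<longrightarrow>
      (\<exists>g\<in>G. g x1 = y1 \<and> g x2 = y2))"

definition quasi_semiregular :: "('a \<Rightarrow> 'a) \<Rightarrow> bool" where
  "quasi_semiregular g \<longleftrightarrow> (\<exists>v. (\<forall>k. (g ^^ k) v = v) \<and>
      (\<forall>u. (\<forall>k. (g ^^ k) u = u) \<longrightarrow> u = v) \<and>
      (\<forall>k w. w \<noteq> v \<longrightarrow> (g ^^ k) w = w \<longrightarrow> g ^^ k = id))"

end

theory Submission
  imports Defs "HOL-Computational_Algebra.Polynomial_Factorial"
    "HOL-Computational_Algebra.Fundamental_Theorem_Algebra"
    "HOL-Algebra.Multiplicative_Group" "HOL-Algebra.Sylow" "HOL-Algebra.Group_Action"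
begin

lemma powdiff_dvd: fixes x :: "'a::comm_ring_1" shows "x^e - 1 dvd x^(e*k) - 1"
proof -
  have "(x^e)^k - 1^k = (x^e - 1) * (\<Sum>i<k. 1 ^ (k - Suc i) * (x^e)^i)"
    by (rule power_diff_sumr2)
  thus ?thesis by (simp add: power_mult)
qed

lemma dvd_pow_gcd:
  fixes q k :: int
  shows "k dvd q^m - 1 \<longrightarrow> k dvd q^n - 1 \<longrightarrow> k dvd q^(gcd m n) - 1"
proof (induction m n rule: gcd_nat_induct)
  fix m :: nat
  show "k dvd q^m - 1 \<longrightarrow> k dvd q^0 - 1 \<longrightarrow> k dvd q^(gcd m 0) - 1" by simp
next
  fix m n :: nat
  assume n0: "0 < n" and IH: "k dvd q^n - 1 \<longrightarrow> k dvd q^(m mod n) - 1 \<longrightarrow> k dvd q^(gcd n (m mod n)) - 1"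
  show "k dvd q^m - 1 \<longrightarrow> k dvd q^n - 1 \<longrightarrow> k dvd q^(gcd m n) - 1"
  proof (intro impI)
    assume a: "k dvd q^m - 1" and b: "k dvd q^n - 1"
    have c: "k dvd q^(n * (m div n)) - 1"
      using b powdiff_dvd[of q n "m div n"] dvd_trans by blast
    have eq: "q^m - 1 = q^(m mod n) * (q^(n * (m div n)) - 1) + (q^(m mod n) - 1)"
    proof -
      have "q^m = q^(m mod n) * q^(n * (m div n))"
        by (metis mult.commute div_mult_mod_eq power_add)
      thus ?thesis by (simp add: algebra_simps)
    qed
    have "k dvd q^(m mod n) - 1"
    proof -
      have "q^(m mod n) - 1 = (q^m - 1) - q^(m mod n) * (q^(n * (m div n)) - 1)"
        using eq by simp
      thus ?thesis using a c by (metis dvd_diff dvd_mult)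
    qed
    with b IH have "k dvd q^(gcd n (m mod n)) - 1" by blast
    thus "k dvd q^(gcd m n) - 1" by (metis gcd_red_nat)
  qed
qed

lemma mpi_mult:
  "map_poly (of_int :: int \<Rightarrow> 'a::comm_ring_1) (p * q) = map_poly of_int p * map_poly of_int q"
  by (simp add: poly_eq_iff coeff_mult coeff_map_poly)

lemma mpi_diff:
  "map_poly (of_int :: int \<Rightarrow> 'a::comm_ring_1) (p - q) = map_poly of_int p - map_poly of_int q"
  by (simp add: poly_eq_iff coeff_map_poly)

lemma mpi_one: "map_poly (of_int :: int \<Rightarrow> 'a::comm_ring_1) 1 = 1"
  by (simp add: poly_eq_iff coeff_map_poly coeff_pCons one_pCons split: nat.split)

lemma mpi_X: "map_poly (of_int :: int \<Rightarrow> 'a::comm_ring_1) [:0,1:] = [:0,1:]"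
  by (simp add: poly_eq_iff coeff_map_poly coeff_pCons split: nat.split)

lemma mpi_power:
  "map_poly (of_int :: int \<Rightarrow> 'a::comm_ring_1) (p ^ n) = (map_poly of_int p) ^ n"
  by (induction n) (simp_all add: mpi_mult mpi_one)

lemma mpi_prod:
  "map_poly (of_int :: int \<Rightarrow> 'a::comm_ring_1) (\<Prod>e\<in>A. f e) = (\<Prod>e\<in>A. map_poly of_int (f e))"
  by (induction A rule: infinite_finite_induct) (simp_all add: mpi_mult mpi_one)

lemma poly_mpi_of_int:
  "poly (map_poly (of_int :: int \<Rightarrow> 'a::comm_ring_1) p) (of_int x) = of_int (poly p x)"
  by (induction p) (simp_all add: map_poly_pCons)

lemma norm_q_minus_root:
  fixes z :: complex and q :: real
  assumes "norm z = 1" "z \<noteq> 1" "q \<ge> 2"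
  shows "norm (of_real q - z) > 1"
proof -
  define a where "a = Re z"
  define b where "b = Im z"
  have ab: "a^2 + b^2 = 1" using assms(1) unfolding a_def b_def
    by (metis cmod_power2 one_power2)
  have "a \<le> 1" using assms(1) unfolding a_def by (metis complex_Re_le_cmod)
  moreover have "a \<noteq> 1"
  proof
    assume "a = 1"
    hence "b = 0" using ab by simp
    hence "z = 1" using \<open>a = 1\<close> unfolding a_def b_def by (simp add: complex_eq_iff)
    with assms(2) show False by simp
  qed
  ultimately have a1: "a < 1" by simp
  have "norm (of_real q - z) ^ 2 = (q - a)^2 + b^2"
    unfolding a_def b_def by (simp add: cmod_power2)
  also have "\<dots> = 1 + q * (q - 2 * a)" using ab by (simp add: power2_eq_square algebra_simps)
  also have "\<dots> > 1" using a1 assms(3) by (simp add: mult_pos_pos)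
  finally have "norm (of_real q - z) ^ 2 > 1" .
  thus ?thesis by (meson norm_ge_zero not_less power_le_one)
qed

lemma prod_mset_norm_gt1:
  fixes f :: "'b \<Rightarrow> complex"
  shows "M \<noteq> {#} \<Longrightarrow> (\<forall>x\<in>#M. norm (f x) > 1) \<Longrightarrow> norm (\<Prod>x\<in>#M. f x) > 1"
proof (induction M)
  case empty
  then show ?case by simp
next
  case (add x M)
  show ?case
  proof (cases "M = {#}")
    case True
    then show ?thesis using add by simp
  next
    case False
    then have "norm (\<Prod>x\<in>#M. f x) > 1" using add by simp
    moreover have "norm (f x) > 1" using add by simp
    ultimately show ?thesis by (simp add: norm_mult less_1_mult)
  qed
qed


lemma lead_Xd: "d \<ge> 1 \<Longrightarrow> lead_coeff ([:0,1:]^d - (1::int poly)) = 1"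
proof -
  assume d: "d \<ge> 1"
  have dX: "degree ([:0,1:]^d :: int poly) = d" by (simp add: degree_power_eq)
  have "[:0,1:]^d - (1::int poly) = (- 1) + [:0,1:]^d" by simp
  also have "lead_coeff \<dots> = lead_coeff ([:0,1:]^d :: int poly)"
    by (rule lead_coeff_add_le) (use dX d in simp)
  also have "\<dots> = 1" by (simp add: lead_coeff_power)
  finally show ?thesis .
qed

lemma cyclo_h_bound:
  fixes l h :: "int poly" and d :: nat and q :: int and D :: "nat set"
  assumes d2: "d \<ge> 2" and q2: "q \<ge> 2" and Ph: "[:0,1:]^d - 1 = l * h"
    and X1: "[:0,1:] - 1 dvd l" and lQ: "l dvd (\<Prod>e\<in>D. [:0,1:]^e - 1)"
    and Dfin: "finite D" and Dlt: "\<forall>e\<in>D. 0<e \<and> e<d"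
  shows "\<bar>poly h q\<bar> > 1"
proof -
  let ?X = "[:0,1:] :: int poly"
  obtain l1 where l1: "l = (?X - 1) * l1" using X1 by (auto elim: dvdE)
  have S: "?X^d - 1 = (?X - 1) * (\<Sum>i<d. ?X^i)" using power_diff_sumr2[of ?X d 1] by simp
  have X1nz: "?X - 1 \<noteq> 0"
  proof
    assume "?X - 1 = 0"
    hence "poly (?X - 1) 0 = 0" by simp
    thus False by simp
  qed
  have "(?X - 1) * (\<Sum>i<d. ?X^i) = (?X - 1) * (l1 * h)" using S Ph l1 by (metis mult.assoc)
  hence "(\<Sum>i<d. ?X^i) = l1 * h" using X1nz by (metis mult_left_cancel)
  hence "poly (\<Sum>i<d. ?X^i) 1 = poly l1 1 * poly h 1" by simp
  moreover have "poly (\<Sum>i<d. ?X^i) 1 = of_nat d" by (simp add: poly_sum)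
  ultimately have h1: "poly h 1 \<noteq> 0" using d2 by (metis mult_zero_right of_nat_eq_0_iff not_numeral_le_zero le_0_eq)
  have "lead_coeff l * lead_coeff h = 1" using lead_Xd[of d] d2 Ph by (simp add: lead_coeff_mult)
  hence lh: "\<bar>lead_coeff h\<bar> = 1" by (metis abs_1 abs_mult zmult_eq_1_iff abs_minus_cancel)
  define hc where "hc = map_poly (of_int::int\<Rightarrow>complex) h"
  define lc where "lc = map_poly (of_int::int\<Rightarrow>complex) l"
  have Pc: "z^d - 1 = poly lc z * poly hc z" for z
  proof -
    have "map_poly (of_int::int\<Rightarrow>complex) (?X^d - 1) = lc * hc"
      unfolding lc_def hc_def Ph by (simp add: mpi_mult)
    hence "[:0,1:]^d - 1 = lc * hc" by (simp add: mpi_diff mpi_power mpi_X mpi_one)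
    hence "poly ([:0,1:]^d - 1) z = poly (lc * hc) z" by simp
    thus ?thesis by simp
  qed
  have hc1: "poly hc 1 \<noteq> 0"
    using poly_mpi_of_int[of h 1, where 'a=complex] h1 unfolding hc_def by simp
  hence hcnz: "hc \<noteq> 0" by auto
  define \<zeta> where "\<zeta> = exp (2 * of_real pi * \<i> / of_nat d)"
  have zpow: "\<zeta>^n = exp (of_nat n * (2 * of_real pi * \<i> / of_nat d))" for n
    unfolding \<zeta>_def by (rule exp_of_nat_mult[symmetric])
  have zd: "\<zeta>^d = 1"
  proof -
    have "\<zeta>^d = exp (2 * of_real pi * \<i>)" using zpow[of d] d2 by simp
    thus ?thesis by (simp add: exp_eq_1)
  qed
  have ze: "\<zeta>^e \<noteq> 1" if "e \<in> D" for e
  proof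
    assume "\<zeta>^e = 1"
    hence "exp (of_nat e * (2 * of_real pi * \<i> / of_nat d)) = 1" using zpow by simp
    then obtain k :: int where k: "Im (of_nat e * (2 * of_real pi * \<i> / of_nat d)) = of_int (2*k) * pi"
      by (auto simp: exp_eq_1)
    have "Im (of_nat e * (2 * of_real pi * \<i> / of_nat d)) = 2 * pi * e / d"
      by simp
    with k have "2 * pi * e / d = 2 * pi * of_int k" by (simp add: mult_ac)
    moreover have "real e / d = (2 * pi * e / d) / (2 * pi)" using pi_gt_zero d2 by (simp add: field_simps)
    ultimately have "e / d = of_int k" using pi_gt_zero by simp
    moreover have "0 < real e / d" "real e / d < 1" using that Dlt by auto
    ultimately show False by (metis of_int_0_less_iff of_int_less_1_iff not_less zero_less_one_class.zero_le_one  int_one_le_iff_zero_less linorder_not_le)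
  qed
  have lcz: "poly lc \<zeta> \<noteq> 0"
  proof
    assume a: "poly lc \<zeta> = 0"
    obtain t where t: "(\<Prod>e\<in>D. ?X^e - 1) = l * t" using lQ by (auto elim: dvdE)
    have "map_poly (of_int::int\<Rightarrow>complex) (\<Prod>e\<in>D. ?X^e - 1) = lc * map_poly of_int t"
      unfolding lc_def t by (simp add: mpi_mult)
    hence "(\<Prod>e\<in>D. [:0,1:]^e - 1) = lc * map_poly (of_int::int\<Rightarrow>complex) t"
      by (simp add: mpi_prod mpi_diff mpi_power mpi_X mpi_one)
    hence "poly (\<Prod>e\<in>D. [:0,1:]^e - 1) \<zeta> = 0" using a by simp
    hence "(\<Prod>e\<in>D. \<zeta>^e - 1) = 0" by (simp add: poly_prod)
    thus False using ze Dfin by auto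
  qed
  have hcz: "poly hc \<zeta> = 0" using Pc[of \<zeta>] zd lcz by simp
  have roots: "norm z = 1 \<and> z \<noteq> 1" if "poly hc z = 0" for z
  proof
    have "z^d = 1" using Pc[of z] that by simp
    hence "norm z ^ d = 1" by (metis norm_one norm_power)
    thus "norm z = 1" using d2 power_eq_imp_eq_base[of "norm z" d 1] by simp
    show "z \<noteq> 1" using that hc1 by auto
  qed
  have dec: "poly hc (of_int q) = lead_coeff hc * (\<Prod>x\<in>#proots hc. of_int q - x)"
  proof -
    have "poly hc (of_int q) = poly (Polynomial.smult (lead_coeff hc) (\<Prod>x\<in>#proots hc. [:-x, 1:])) (of_int q)"
      by (simp only: complex_poly_decompose_multiset)
    thus ?thesis by (simp add: poly_prod_mset)
  qed
  have lhc: "norm (lead_coeff hc) = 1"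
  proof -
    have "lead_coeff hc = of_int (lead_coeff h)" unfolding hc_def
      using lh by (intro lead_coeff_map_poly_nz) auto
    hence "norm (lead_coeff hc) = of_int \<bar>lead_coeff h\<bar>" by (simp only: norm_of_int)
    thus ?thesis using lh by simp
  qed
  have "\<zeta> \<in> set_mset (proots hc)" using hcz set_count_proots[OF hcnz] by auto
  hence "proots hc \<noteq> {#}" by auto
  moreover have "\<forall>x\<in>#proots hc. norm (of_int q - x) > 1"
  proof
    fix x assume "x \<in># proots hc"
    hence "poly hc x = 0" using set_count_proots[of hc] hcnz by auto
    hence "norm x = 1" "x \<noteq> 1" using roots by auto
    moreover have "real_of_int q \<ge> 2" using q2 by simp
    ultimately have "norm (of_real (of_int q) - x) > 1" by (rule norm_q_minus_root)
    thus "norm (of_int q - x) > 1" by simp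
  qed
  ultimately have "norm (\<Prod>x\<in>#proots hc. of_int q - x) > 1" by (rule prod_mset_norm_gt1)
  hence "norm (poly hc (of_int q)) > 1" using dec lhc by (simp add: norm_mult)
  moreover have "poly hc (of_int q) = of_int (poly h q)" unfolding hc_def by (rule poly_mpi_of_int)
  ultimately have "norm (complex_of_int (poly h q)) > 1" by simp
  hence "real_of_int \<bar>poly h q\<bar> > 1" by (simp only: norm_of_int)
  thus ?thesis by simp
qed


lemma zsig:
  fixes q :: int and d :: nat
  assumes q2: "q \<ge> 2" and d2: "d \<ge> 2"
  shows "\<exists>r. prime r \<and> r dvd q^d - 1 \<and> (\<forall>e. 0 < e \<and> e < d \<longrightarrow> \<not> r ^ multiplicity r (q^d - 1) dvd q^e - 1)"
proof (rule ccontr)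
  assume H: "\<not> ?thesis"
  let ?X = "[:0,1:] :: int poly"
  define m where "m = q^d - 1"
  define D where "D = {e. 0 < e \<and> e < d \<and> e dvd d}"
  have Dfin: "finite D" unfolding D_def by (rule finite_subset[of _ "{..<d}"]) auto
  define Q where "Q = (\<Prod>e\<in>D. ?X^e - 1)"
  define l where "l = gcd (?X^d - 1) Q"
  obtain h where Ph: "?X^d - 1 = l * h" unfolding l_def by (metis gcd_dvd1 dvdE)
  have ldvd: "?X^e - 1 dvd l" if "e \<in> D" for e
  proof -
    have "e dvd d" using that D_def by auto
    then obtain k where "d = e * k" by auto
    hence "?X^e - 1 dvd ?X^d - 1" using powdiff_dvd by metis
    moreover have "?X^e - 1 dvd Q" unfolding Q_def using that Dfin by (intro dvd_prodI)
    ultimately show ?thesis unfolding l_def by (rule gcd_greatest)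
  qed
  have mval: "m = poly l q * poly h q" using arg_cong[OF Ph, of "\<lambda>p. poly p q"] unfolding m_def by simp
  have "1 < q^d" using q2 d2 by (intro one_less_power) auto
  hence mpos: "m > 0" unfolding m_def by simp
  have lq0: "poly l q \<noteq> 0" using mval mpos by auto
  have "m dvd poly l q"
  proof (rule multiplicity_le_imp_dvd)
    show "m \<noteq> 0" using mpos by simp
    fix r :: int assume r: "prime r"
    show "multiplicity r m \<le> multiplicity r (poly l q)"
    proof (cases "r dvd m")
      case False thus ?thesis by (simp add: not_dvd_imp_multiplicity_0)
    next
      case True
      then obtain e where e: "0 < e" "e < d" "r ^ multiplicity r m dvd q^e - 1"
        using H r unfolding m_def by blast
      have "r ^ multiplicity r m dvd m" by (rule multiplicity_dvd)
      hence rg: "r ^ multiplicity r m dvd q^(gcd d e) - 1" using dvd_pow_gcd e(3) unfolding m_def by blast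
      have "gcd d e \<in> D" unfolding D_def using e
        by (auto intro: le_less_trans[OF gcd_le2_nat])
      then obtain t where t: "l = (?X^(gcd d e) - 1) * t" using ldvd by (auto elim: dvdE)
      have "poly l q = (q^(gcd d e) - 1) * poly t q" using t by simp
      hence "q^(gcd d e) - 1 dvd poly l q" by simp
      with rg have "r ^ multiplicity r m dvd poly l q" by (rule dvd_trans)
      moreover have "\<not> is_unit r" using r not_prime_unit by blast
      ultimately show ?thesis using lq0 by (intro multiplicity_geI)
    qed
  qed
  hence le: "\<bar>m\<bar> \<le> \<bar>poly l q\<bar>" by (rule dvd_imp_le_int[OF lq0])
  have "\<bar>poly h q\<bar> > 1"
  proof (rule cyclo_h_bound[OF d2 q2 Ph])
    have "1 \<in> D" unfolding D_def using d2 by auto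
    thus "?X - 1 dvd l" using ldvd[of 1] by simp
    show "l dvd (\<Prod>e\<in>D. ?X^e - 1)" unfolding l_def Q_def by (rule gcd_dvd2)
    show "finite D" by (rule Dfin)
    show "\<forall>e\<in>D. 0<e \<and> e<d" unfolding D_def by auto
  qed
  hence "\<bar>poly l q\<bar> * 2 \<le> \<bar>poly l q\<bar> * \<bar>poly h q\<bar>" by (intro mult_left_mono) auto
  moreover have "\<bar>m\<bar> = \<bar>poly l q\<bar> * \<bar>poly h q\<bar>" using mval by (simp add: abs_mult)
  moreover have "\<bar>poly l q\<bar> > 0" using lq0 by simp
  ultimately show False using le by linarith
qed

lemma mult_int_nat:
  fixes p x :: nat
  assumes "prime p" "x > 0"
  shows "multiplicity (int p) (int x) = multiplicity p x"
proof (rule multiplicity_eqI)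
  show "int p ^ multiplicity p x dvd int x"
    by (metis multiplicity_dvd of_nat_dvd_iff of_nat_power)
  show "\<not> int p ^ Suc (multiplicity p x) dvd int x"
  proof
    assume "int p ^ Suc (multiplicity p x) dvd int x"
    hence "p ^ Suc (multiplicity p x) dvd x" by (metis of_nat_dvd_iff of_nat_power)
    hence "Suc (multiplicity p x) \<le> multiplicity p x"
      using assms by (intro multiplicity_geI) (auto simp: not_prime_unit)
    thus False by simp
  qed
qed

lemma zsig_nat:
  fixes q d :: nat
  assumes q2: "q \<ge> 2" and d1: "d \<ge> 1" and q3: "q^d \<ge> 3"
  shows "\<exists>r. prime r \<and> r dvd q^d - 1 \<and> (\<forall>e. 0 < e \<and> e < d \<longrightarrow> \<not> r ^ multiplicity r (q^d - 1) dvd q^e - 1)"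
proof (cases "d = 1")
  case True
  have "q^d - 1 \<noteq> 1" using q3 by simp
  then obtain r where "prime r" "r dvd q^d - 1" using prime_factor_nat by blast
  thus ?thesis using True by auto
next
  case False
  hence d2: "d \<ge> 2" using d1 by simp
  obtain r where r: "prime r" "r dvd int q^d - 1"
    "\<forall>e. 0 < e \<and> e < d \<longrightarrow> \<not> r ^ multiplicity r (int q^d - 1) dvd int q^e - 1"
    using zsig[of "int q" d] q2 d2 by auto
  have r0: "r \<ge> 0" using r(1) by (simp add: prime_ge_0_int)
  define n where "n = nat r"
  have rn: "r = int n" unfolding n_def using r0 by simp
  have pn: "prime n" using r(1) rn by (simp add: prime_int_nat_transfer)
  have qd1: "q^d \<ge> 1" using q3 by simp
  have cv: "int q^k - 1 = int (q^k - 1)" if "q^k \<ge> 1" for k using that by (simp add: of_nat_diff)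
  have qe1: "q^e \<ge> 1" for e using q2 by simp
  have "n dvd q^d - 1" using r(2) rn cv[OF qd1] by (metis of_nat_dvd_iff)
  moreover have "\<not> n ^ multiplicity n (q^d - 1) dvd q^e - 1" if "0 < e" "e < d" for e
  proof
    assume a: "n ^ multiplicity n (q^d - 1) dvd q^e - 1"
    have qp: "q^d - 1 > 0" using q3 by simp
    have m1: "multiplicity r (int (q^d - 1)) = multiplicity n (q^d - 1)"
      unfolding rn by (rule mult_int_nat[OF pn qp])
    have "multiplicity r (int q^d - 1) = multiplicity n (q^d - 1)"
      by (subst cv[OF qd1]) (rule m1)
    hence "r ^ multiplicity r (int q^d - 1) dvd int q^e - 1"
      using a rn cv[OF qe1] by (metis of_nat_dvd_iff of_nat_power)
    thus False using r(3) that by blast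
  qed
  ultimately show ?thesis using pn by blast
qed

lemma card_span_pow:
  fixes S :: "('f::{finite,field}^'d) set"
  shows "\<exists>e. card (vec.span S) = CARD('f)^e"
proof -
  have "finite S" by simp
  thus ?thesis
  proof (induction S rule: finite_induct)
    case empty
    show ?case by (rule exI[of _ 0]) simp
  next
    case (insert x S)
    then obtain e where e: "card (vec.span S) = CARD('f)^e" by blast
    show ?case
    proof (cases "x \<in> vec.span S")
      case True
      thus ?thesis using e vec.span_redundant by metis
    next
      case False
      let ?f = "\<lambda>(y, c). y + c *s x"
      have img: "vec.span (insert x S) = ?f ` (vec.span S \<times> UNIV)"
      proof
        show "vec.span (insert x S) \<subseteq> ?f ` (vec.span S \<times> UNIV)"
        proof
          fix v assume "v \<in> vec.span (insert x S)"
          then obtain k where k: "v - k *s x \<in> vec.span S" unfolding vec.span_insert by blast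
          show "v \<in> ?f ` (vec.span S \<times> UNIV)"
            by (rule image_eqI[of _ _ "(v - k *s x, k)"]) (use k in auto)
        qed
        show "?f ` (vec.span S \<times> UNIV) \<subseteq> vec.span (insert x S)"
        proof (clarify)
          fix a b assume "a \<in> vec.span S"
          thus "a + b *s x \<in> vec.span (insert x S)" unfolding vec.span_insert
            by (intro CollectI exI[of _ b]) simp
        qed
      qed
      have inj: "inj_on ?f (vec.span S \<times> UNIV)"
      proof (rule inj_onI, clarify)
        fix y1 c1 y2 c2
        assume y1: "y1 \<in> vec.span S" and y2: "y2 \<in> vec.span S" and eq: "y1 + c1 *s x = y2 + c2 *s x"
        have d: "(c1 - c2) *s x = y2 - y1"
        proof -
          have "(c1 - c2) *s x = c1 *s x - c2 *s x" by (rule vec.scale_left_diff_distrib)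
          also have "\<dots> = y2 - y1" using eq by (simp add: algebra_simps)
          finally show ?thesis .
        qed
        have "c1 = c2"
        proof (rule ccontr)
          assume ne: "c1 \<noteq> c2"
          have "inverse (c1 - c2) *s ((c1 - c2) *s x) = (inverse (c1 - c2) * (c1 - c2)) *s x"
            by (rule vec.scale_scale)
          also have "\<dots> = x" using ne by simp
          finally have "x = inverse (c1 - c2) *s ((c1 - c2) *s x)" by simp
          also have "\<dots> = inverse (c1 - c2) *s (y2 - y1)" using d by simp
          finally have "x \<in> vec.span S" using y1 y2 by (simp add: vec.span_scale vec.span_diff)
          thus False using False by simp
        qed
        thus "y1 = y2 \<and> c1 = c2" using eq by simp
      qed
      have "card (vec.span (insert x S)) = card (vec.span S \<times> (UNIV :: 'f set))"
        unfolding img by (rule card_image[OF inj])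
      also have "\<dots> = CARD('f)^(Suc e)" by (simp add: card_cartesian_product e)
      finally show ?thesis by blast
    qed
  qed
qed

definition GR :: "('a \<Rightarrow> 'a) set \<Rightarrow> ('a \<Rightarrow> 'a) monoid" where
  "GR S = \<lparr>carrier = S, monoid.mult = (\<circ>), one = id\<rparr>"

lemma GR_simps [simp]: "carrier (GR S) = S" "monoid.mult (GR S) = (\<circ>)" "one (GR S) = id"
  by (simp_all add: GR_def)

lemma group_GR:
  assumes "id \<in> S" "\<And>g. g \<in> S \<Longrightarrow> bij g" "\<And>g h. g \<in> S \<Longrightarrow> h \<in> S \<Longrightarrow> g \<circ> h \<in> S"
    "\<And>g. g \<in> S \<Longrightarrow> inv_into UNIV g \<in> S"
  shows "group (GR S)"
proof (rule groupI)
  fix x assume x: "x \<in> carrier (GR S)"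
  hence "inv_into UNIV x \<circ> x = id" using assms(2) by (simp add: bij_is_inj inv_o_cancel)
  thus "\<exists>y\<in>carrier (GR S). y \<otimes>\<^bsub>GR S\<^esub> x = \<one>\<^bsub>GR S\<^esub>" using x assms(4) by auto
qed (use assms in \<open>auto simp: comp_assoc\<close>)

lemma GR_update: "(GR S)\<lparr>carrier := K\<rparr> = GR K"
  by (simp add: GR_def)

lemma action_GR:
  assumes "group (GR S)" "\<And>g. g \<in> S \<Longrightarrow> bij g"
  shows "group_action (GR S) UNIV (\<lambda>g. g)"
proof -
  have B: "g \<in> Bij UNIV" if "g \<in> S" for g
    using assms(2)[OF that] by (auto simp: Bij_def extensional_def bij_def)
  have "(\<lambda>g. g) \<in> hom (GR S) (BijGroup UNIV)"
    by (rule homI) (auto simp: BijGroup_def B compose_def comp_def)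
  thus ?thesis
    unfolding group_action_def group_hom_def group_hom_axioms_def
    using assms group_BijGroup by auto
qed

lemma GR_pow: "x [^]\<^bsub>GR S\<^esub> (n::nat) = x ^^ n"
  by (induction n) (simp_all add: comp_def funpow_swap1)

lemma (in group) pgroup_center:
  assumes fin: "finite (carrier G)" and cK: "card (carrier G) = r^b"
    and r: "prime r" and b: "b \<ge> 1"
  shows "\<exists>x\<in>carrier G. x \<noteq> \<one> \<and> (\<forall>g\<in>carrier G. g \<otimes> x = x \<otimes> g)"
proof (rule ccontr)
  assume nc: "\<not> ?thesis"
  define \<phi> where "\<phi> = (\<lambda>g. \<lambda>h\<in>carrier G. g \<otimes> h \<otimes> inv g)"
  interpret A: group_action G "carrier G" \<phi> unfolding \<phi>_def by (rule action_by_conjugation)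
  define E where "E = carrier G - {\<one>}"
  define C where "C = {orbit G \<phi> x | x. x \<in> E}"
  have orbsub: "orbit G \<phi> x \<subseteq> E" if x: "x \<in> E" for x
  proof
    fix y assume "y \<in> orbit G \<phi> x"
    then obtain g where g: "g \<in> carrier G" "y = \<phi> g x" unfolding orbit_def by blast
    have xc: "x \<in> carrier G" "x \<noteq> \<one>" using x E_def by auto
    have "y = g \<otimes> x \<otimes> inv g" using g xc unfolding \<phi>_def by simp
    moreover have "g \<otimes> x \<otimes> inv g \<noteq> \<one>"
    proof
      assume "g \<otimes> x \<otimes> inv g = \<one>"
      hence "inv g \<otimes> (g \<otimes> x \<otimes> inv g) \<otimes> g = inv g \<otimes> \<one> \<otimes> g" by simp
      moreover have ic: "inv g \<otimes> (g \<otimes> x) = x" using g xc by (simp add: m_assoc[symmetric])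
      moreover have "inv g \<otimes> (g \<otimes> x \<otimes> inv g) \<otimes> g = x"
        using g xc ic by (simp add: m_assoc)
      moreover have "inv g \<otimes> \<one> \<otimes> g = \<one>" using g by simp
      ultimately have "x = \<one>" using g by simp
      thus False using xc by simp
    qed
    ultimately show "y \<in> E" using g xc unfolding E_def by auto
  qed
  have UC: "\<Union>C = E"
  proof
    show "\<Union>C \<subseteq> E" unfolding C_def using orbsub by blast
    show "E \<subseteq> \<Union>C"
    proof
      fix x assume "x \<in> E"
      hence "x \<in> orbit G \<phi> x" using A.orbit_refl E_def by auto
      thus "x \<in> \<Union>C" unfolding C_def using \<open>x \<in> E\<close> by blast
    qed
  qed
  have dv: "r dvd card c" if cC: "c \<in> C" for c
  proof -
    obtain x where x: "x \<in> E" "c = orbit G \<phi> x" using cC C_def by blast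
    have xc: "x \<in> carrier G" "x \<noteq> \<one>" using x E_def by auto
    have "card c * card (stabilizer G \<phi> x) = r^b"
      using A.orbit_stabilizer_theorem[OF xc(1)] x cK by (simp add: order_def)
    hence "card c dvd r^b" by (metis dvd_triv_left)
    then obtain i where i: "i \<le> b" "card c = r^i" using r by (auto simp: divides_primepow_nat)
    show ?thesis
    proof (cases "i = 0")
      case False
      thus ?thesis using i by simp
    next
      case True
      hence "card c = 1" using i by simp
      moreover have "x \<in> c" using x A.orbit_refl xc by auto
      ultimately have cx: "c = {x}" by (metis card_1_singletonE singletonD)
      have "g \<otimes> x = x \<otimes> g" if g: "g \<in> carrier G" for g
      proof -
        have "\<phi> g x \<in> c" using x g unfolding orbit_def by blast
        hence "g \<otimes> x \<otimes> inv g = x" using cx xc g unfolding \<phi>_def by simp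
        hence "g \<otimes> x \<otimes> inv g \<otimes> g = x \<otimes> g" by simp
        thus ?thesis using g xc by (simp add: m_assoc)
      qed
      thus ?thesis using nc xc by blast
    qed
  qed
  have disj: "\<forall>c1\<in>C. \<forall>c2\<in>C. c1 \<noteq> c2 \<longrightarrow> c1 \<inter> c2 = {}"
  proof (intro ballI impI)
    fix c1 c2 assume "c1 \<in> C" "c2 \<in> C" "c1 \<noteq> c2"
    moreover have "C \<subseteq> orbits G (carrier G) \<phi>" unfolding C_def orbits_def E_def by blast
    ultimately show "c1 \<inter> c2 = {}" using A.disjoint_union by blast
  qed
  have "finite (\<Union>C)" using UC fin E_def by simp
  hence "r dvd card (\<Union>C)" using dv disj by (intro dvd_partition) auto
  hence "r dvd card E" using UC by simp
  moreover have "card E = r^b - 1" unfolding E_def using cK fin by (simp add: card_Diff_singleton)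
  ultimately have "r dvd r^b - 1" by simp
  moreover have "r dvd r^b" using b by (simp add: dvd_power)
  ultimately have "r dvd r^b - (r^b - 1)" by (rule dvd_diff_nat[rotated])
  moreover have "r^b - (r^b - 1) = 1"
  proof -
    have "0 < r^b" using r by (simp add: prime_gt_0_nat)
    thus ?thesis by linarith
  qed
  ultimately show False using r by simp
qed

lemma funpow_fix: "f y = y \<Longrightarrow> (f ^^ n) y = y"
  by (induction n) simp_all

lemma idpow: "(id::'a\<Rightarrow>'a) ^^ n = id"
  by (induction n) simp_all

lemma powcomm_pt:
  assumes "\<And>y. h (g y) = g (h y)"
  shows "h ((g ^^ n) y) = (g ^^ n) (h y)"
  by (induction n) (simp_all add: assms)

lemma main_linear:
  fixes G0 :: "('f::{finite,field}^'d \<Rightarrow> 'f^'d) set"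
  assumes idG: "id \<in> G0" and bijG: "\<And>g. g \<in> G0 \<Longrightarrow> bij g"
    and compG: "\<And>g h. g \<in> G0 \<Longrightarrow> h \<in> G0 \<Longrightarrow> g \<circ> h \<in> G0"
    and invG: "\<And>g. g \<in> G0 \<Longrightarrow> inv_into UNIV g \<in> G0"
    and addG: "\<And>g x y. g \<in> G0 \<Longrightarrow> g (x + y) = g x + g y"
    and smulG: "\<And>g c x. g \<in> G0 \<Longrightarrow> g (c *s x) = c *s g x"
    and transG: "\<And>v w. v \<noteq> 0 \<Longrightarrow> w \<noteq> 0 \<Longrightarrow> \<exists>g\<in>G0. g v = w"
    and card3: "CARD('f^'d) \<ge> 3"
  shows "\<exists>z\<in>G0. quasi_semiregular z"
proof -
  define q where "q = CARD('f)"
  define d where "d = CARD('d)"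
  have q2: "q \<ge> 2"
  proof -
    have "card {0::'f, 1} = 2" by simp
    moreover have "card {0::'f,1} \<le> q" unfolding q_def by (rule card_mono) auto
    ultimately show ?thesis by simp
  qed
  have d1: "d \<ge> 1" unfolding d_def by (simp add: Suc_le_eq)
  have cardV: "CARD('f^'d) = q^d" unfolding q_def d_def by (rule CARD_vec)
  have q3: "q^d \<ge> 3" using card3 cardV by simp
  obtain r where rp: "prime r" and rN: "r dvd q^d - 1"
    and rz: "\<forall>e. 0 < e \<and> e < d \<longrightarrow> \<not> r ^ multiplicity r (q^d - 1) dvd q^e - 1"
    using zsig_nat[OF q2 d1 q3] by blast
  define N where "N = q^d - 1"
  define a where "a = multiplicity r N"
  have g0: "g 0 = 0" if "g \<in> G0" for g
    using addG[OF that, of 0 0] by simp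
  have gnz: "g w \<noteq> 0" if "g \<in> G0" "w \<noteq> 0" for g w
    using that g0[OF that(1)] bijG[OF that(1)] by (metis bij_is_inj injD)
  define H where "H = GR G0"
  have gH: "group H" unfolding H_def by (rule group_GR) (use idG bijG compG invG in auto)
  interpret H: group H by (rule gH)
  have actH: "group_action H UNIV (\<lambda>g. g)" unfolding H_def
    by (rule action_GR) (use gH[unfolded H_def] bijG in auto)
  have finG0: "finite G0" by (rule finite_subset[OF subset_UNIV]) simp
  have orbH: "orbit H (\<lambda>g. g) v = UNIV - {0}" if vnz: "v \<noteq> 0" for v
  proof
    show "orbit H (\<lambda>g. g) v \<subseteq> UNIV - {0}"
    proof
      fix y assume "y \<in> orbit H (\<lambda>g. g) v"
      then obtain g where g: "g \<in> G0" "y = g v" unfolding orbit_def H_def by auto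
      thus "y \<in> UNIV - {0}" using gnz[OF g(1) vnz] by simp
    qed
    show "UNIV - {0} \<subseteq> orbit H (\<lambda>g. g) v"
    proof
      fix w assume "w \<in> (UNIV::('f^'d) set) - {0}"
      hence "w \<noteq> 0" by simp
      then obtain g where g: "g \<in> G0" "g v = w" using transG[OF vnz] by blast
      have "g \<in> carrier H" using g(1) unfolding H_def by simp
      thus "w \<in> orbit H (\<lambda>g. g) v" unfolding orbit_def using g(2) by blast
    qed
  qed
  have stabH: "card G0 = N * card (stabilizer H (\<lambda>g. g) v)" if "v \<noteq> 0" for v
  proof -
    have "card (orbit H (\<lambda>g. g) v) * card (stabilizer H (\<lambda>g. g) v) = order H"
      by (rule group_action.orbit_stabilizer_theorem[OF actH]) simp
    moreover have "card (orbit H (\<lambda>g. g) v) = N"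
      unfolding orbH[OF that] N_def using cardV by (simp add: card_Diff_singleton)
    moreover have "order H = card G0" unfolding order_def H_def by simp
    ultimately show ?thesis by simp
  qed
  obtain v0 :: "'f^'d" where v0: "v0 \<noteq> 0"
  proof -
    have "UNIV \<noteq> {0::'f^'d}"
    proof
      assume "UNIV = {0::'f^'d}"
      hence "CARD('f^'d) = card {0::'f^'d}" by (rule arg_cong)
      hence "CARD('f^'d) = 1" by (simp del: CARD_vec)
      thus False using card3 by (simp del: CARD_vec)
    qed
    thus ?thesis using that by blast
  qed
  define ord0 where "ord0 = card G0"
  have opos: "ord0 > 0" using finG0 idG by (auto simp: ord0_def card_gt_0_iff)
  define b where "b = multiplicity r ord0"
  have Ndvd: "N dvd ord0" using stabH[OF v0] ord0_def by simp
  have Npos: "N > 0" using q3 N_def by simp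
  have notunit: "\<not> is_unit r" using rp not_prime_unit by blast
  have b1: "b \<ge> 1"
  proof -
    have "r dvd ord0" using rN Ndvd N_def dvd_trans by blast
    hence "r^1 dvd ord0" by simp
    thus ?thesis unfolding b_def using opos notunit by (intro multiplicity_geI) auto
  qed
  obtain R where R: "subgroup R H" "card R = r^b"
  proof -
    have "r^b dvd ord0" unfolding b_def by (rule multiplicity_dvd)
    hence "order H = r^b * (ord0 div r^b)" unfolding order_def H_def ord0_def by simp
    thus ?thesis using sylow_thm[of r H b "ord0 div r^b"] rp gH finG0 that H_def by auto
  qed
  have RG0: "R \<subseteq> G0" using R(1) subgroup.subset H_def by fastforce
  define K where "K = GR R"
  have KH: "H\<lparr>carrier := R\<rparr> = K" unfolding H_def K_def by (rule GR_update)
  have gK: "group K" using subgroup.subgroup_is_group[OF R(1) gH] KH by simp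
  have actK: "group_action K UNIV (\<lambda>g. g)" unfolding K_def
    by (rule action_GR) (use gK[unfolded K_def] RG0 bijG in auto)
  have finR: "finite R" using RG0 finG0 finite_subset by blast
  have orbK: "r^a dvd card (orbit K (\<lambda>g. g) w)" if w: "w \<noteq> 0" for w
  proof -
    define T where "T = stabilizer H (\<lambda>g. g) w"
    have T: "subgroup T H" unfolding T_def by (rule group_action.stabilizer_subgroup[OF actH]) simp
    have sKw: "stabilizer K (\<lambda>g. g) w = R \<inter> T" unfolding T_def stabilizer_def K_def H_def
      using RG0 by auto
    have sub: "subgroup (R \<inter> T) (H\<lparr>carrier := T\<rparr>)"
      by (rule H.subgroup_incl[OF H.subgroups_Inter_pair[OF R(1) T] T]) auto
    have gT: "group (H\<lparr>carrier := T\<rparr>)" by (rule subgroup.subgroup_is_group[OF T gH])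
    have "card (rcosets\<^bsub>H\<lparr>carrier := T\<rparr>\<^esub> (R \<inter> T)) * card (R \<inter> T) = order (H\<lparr>carrier := T\<rparr>)"
      by (rule group.lagrange[OF gT sub])
    hence cdT: "card (R \<inter> T) dvd card T" unfolding order_def by (metis dvd_triv_right partial_object.select_convs(1) partial_object.surjective partial_object.update_convs(1))
    have oK: "card (orbit K (\<lambda>g. g) w) * card (R \<inter> T) = r^b"
      using group_action.orbit_stabilizer_theorem[OF actK, of w] sKw R(2)
      by (simp add: order_def K_def)
    hence "card (R \<inter> T) dvd r^b" by (metis dvd_triv_right)
    then obtain j where j: "j \<le> b" "card (R \<inter> T) = r^j" using rp by (auto simp: divides_primepow_nat)
    have cardT: "ord0 = N * card T" using stabH[OF w] ord0_def T_def by simp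
    have Tpos: "card T \<noteq> 0" using cardT opos by auto
    have pe: "prime_elem r" using rp by simp
    have mb: "b = a + multiplicity r (card T)" unfolding b_def a_def cardT
      using Npos Tpos pe by (simp add: prime_elem_multiplicity_mult_distrib)
    have "r^j dvd card T" using cdT j by simp
    hence "j \<le> multiplicity r (card T)" using Tpos notunit by (intro multiplicity_geI) auto
    hence ajb: "a + j \<le> b" using mb by simp
    have rj: "r^j > 0" using rp by (simp add: prime_gt_0_nat)
    have "card (orbit K (\<lambda>g. g) w) * r^j = r^(b - j) * r^j"
      using oK j by (simp add: power_add[symmetric])
    moreover have "r > 0" using rp by (simp add: prime_gt_0_nat)
    ultimately have "card (orbit K (\<lambda>g. g) w) = r^(b - j)" using rj by simp
    moreover have "r^a dvd r^(b - j)" using ajb by (intro le_imp_power_dvd) simp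
    ultimately show ?thesis by simp
  qed
  obtain x where x: "x \<in> R" "x \<noteq> id" "\<forall>g\<in>R. g \<circ> x = x \<circ> g"
    using group.pgroup_center[OF gK, of r b] finR R(2) rp b1 unfolding K_def by auto
  have xpow: "x ^^ (r^b) = id"
  proof -
    have "x [^]\<^bsub>K\<^esub> order K = \<one>\<^bsub>K\<^esub>"
      by (rule group.pow_order_eq_1[OF gK]) (use finR x(1) in \<open>simp_all add: K_def\<close>)
    thus ?thesis using R(2) by (simp add: K_def GR_pow order_def)
  qed
  have powG0: "g ^^ n \<in> G0" if "g \<in> G0" for g n
    using that by (induction n) (simp_all add: idG compG)
  define P where "P j \<longleftrightarrow> x ^^ (r^j) = id" for j
  have Pb: "P b" using xpow P_def by simp
  have nP0: "\<not> P 0" using x(2) P_def by simp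
  define j where "j = (LEAST j. P j)"
  have Pj: "P j" unfolding j_def by (rule LeastI[of P b]) (rule Pb)
  have j0: "j \<noteq> 0"
  proof
    assume "j = 0"
    thus False using Pj nP0 by simp
  qed
  define z where "z = x ^^ (r^(j-1))"
  have zne: "z \<noteq> id"
  proof -
    have "\<not> P (j - 1)" unfolding j_def by (rule not_less_Least) (use j0 j_def in simp)
    thus ?thesis unfolding z_def P_def by simp
  qed
  have zr: "z ^^ r = id"
  proof -
    have "z ^^ r = x ^^ (r^(j-1) * r)" unfolding z_def by (simp add: funpow_mult)
    also have "r^(j-1) * r = r^j" using j0 by (metis Suc_pred' neq0_conv power_Suc2)
    finally show ?thesis using Pj P_def by (simp add: id_def)
  qed
  have zG0: "z \<in> G0" unfolding z_def using powG0 x(1) RG0 by blast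
  have zcomm: "g (z y) = z (g y)" if "g \<in> R" for g y
  proof -
    have "\<And>y. g (x y) = x (g y)" using x(3) that by (metis comp_apply)
    thus ?thesis unfolding z_def by (rule powcomm_pt)
  qed
  have fix0: "\<forall>w. z w = w \<longrightarrow> w = 0"
  proof (rule ccontr)
    assume "\<not> (\<forall>w. z w = w \<longrightarrow> w = 0)"
    then obtain w0 where w0: "z w0 = w0" "w0 \<noteq> 0" by auto
    define W where "W = {w. z w = w}"
    have Wsub: "vec.subspace W" unfolding vec.subspace_def W_def
      using g0[OF zG0] addG[OF zG0] smulG[OF zG0] by auto
    define S where "S = W - {0}"
    define C where "C = {orbit K (\<lambda>g. g) w | w. w \<in> S}"
    have orbS: "orbit K (\<lambda>g. g) w \<subseteq> S" if wS: "w \<in> S" for w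
    proof
      fix y assume "y \<in> orbit K (\<lambda>g. g) w"
      then obtain g where g: "g \<in> R" "y = g w" unfolding orbit_def K_def by auto
      have "z (g w) = g w" using zcomm[OF g(1), of w] wS unfolding S_def W_def by simp
      moreover have "g w \<noteq> 0" using gnz g(1) RG0 wS unfolding S_def by auto
      ultimately show "y \<in> S" using g(2) unfolding S_def W_def by simp
    qed
    have UC: "\<Union>C = S"
    proof
      show "\<Union>C \<subseteq> S" unfolding C_def using orbS by blast
      show "S \<subseteq> \<Union>C"
      proof
        fix w assume "w \<in> S"
        moreover have "w \<in> orbit K (\<lambda>g. g) w"
          by (rule group_action.orbit_refl[OF actK]) simp
        ultimately show "w \<in> \<Union>C" unfolding C_def by blast
      qed
    qed
    have disj: "\<forall>c1\<in>C. \<forall>c2\<in>C. c1 \<noteq> c2 \<longrightarrow> c1 \<inter> c2 = {}"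
    proof (intro ballI impI)
      fix c1 c2 assume "c1 \<in> C" "c2 \<in> C" "c1 \<noteq> c2"
      moreover have "C \<subseteq> orbits K UNIV (\<lambda>g. g)" unfolding C_def orbits_def by blast
      ultimately show "c1 \<inter> c2 = {}" using group_action.disjoint_union[OF actK] by blast
    qed
    have dvC: "\<forall>c\<in>C. r^a dvd card c"
    proof
      fix c assume "c \<in> C"
      then obtain w where "w \<in> S" "c = orbit K (\<lambda>g. g) w" unfolding C_def by blast
      thus "r^a dvd card c" using orbK unfolding S_def by auto
    qed
    have "r^a dvd card (\<Union>C)" by (rule dvd_partition) (use dvC disj in auto)
    hence dS: "r^a dvd card S" using UC by simp
    obtain e where e: "card (vec.span W) = q^e" unfolding q_def using card_span_pow by blast
    hence eW: "card W = q^e" using Wsub vec.span_eq_iff by metis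
    have W0: "0 \<in> W" unfolding W_def using g0[OF zG0] by simp
    have cS: "card S = q^e - 1" unfolding S_def using W0 eW by (simp add: card_Diff_singleton)
    have "{0, w0} \<subseteq> W" using W0 w0 unfolding W_def by auto
    hence "card {0, w0} \<le> card W" by (intro card_mono) auto
    hence "2 \<le> q^e" using w0(2) eW by simp
    hence e0: "e > 0" by (cases e) auto
    have "W \<noteq> UNIV"
    proof
      assume "W = UNIV"
      have "z y = y" for y
      proof -
        have "y \<in> W" using \<open>W = UNIV\<close> by simp
        thus ?thesis unfolding W_def by simp
      qed
      hence "z = id" by (simp add: fun_eq_iff)
      thus False using zne by simp
    qed
    hence "W \<subset> UNIV" by blast
    hence "card W < CARD('f^'d)" by (rule psubset_card_mono[rotated]) simp
    hence "q^e < q^d" using eW cardV by simp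
    hence ed: "e < d" using q2 by (simp add: power_less_imp_less_exp)
    have "r ^ multiplicity r (q^d - 1) dvd q^e - 1" using dS cS a_def N_def by simp
    thus False using rz e0 ed by blast
  qed
  have zk0: "(z^^k) 0 = 0" for k using g0[OF zG0] by (rule funpow_fix)
  have zrm: "z ^^ (r * m) = id" for m
    using zr by (simp add: funpow_mult[symmetric] idpow)
  have qs: "quasi_semiregular z" unfolding quasi_semiregular_def
  proof (intro exI[of _ 0] conjI allI impI)
    show "(z^^k) 0 = 0" for k by (rule zk0)
  next
    fix u assume "\<forall>k. (z^^k) u = u"
    hence "(z^^1) u = u" by blast
    hence "z u = u" by simp
    thus "u = 0" using fix0 by blast
  next
    fix k w assume w: "w \<noteq> 0" "(z^^k) w = w"
    define t where "t = k mod r"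
    have zk: "z^^k = z^^t"
    proof -
      have "k = r * (k div r) + t" unfolding t_def by simp
      hence "z^^k = (z^^(r * (k div r))) \<circ> (z^^t)" by (metis funpow_add)
      thus ?thesis using zrm by simp
    qed
    show "z^^k = id"
    proof (cases "t = 0")
      case True
      then show ?thesis using zk by simp
    next
      case False
      have tr: "t < r" unfolding t_def using rp by (simp add: prime_gt_0_nat)
      have "\<not> r dvd t" using False tr by (auto dest: dvd_imp_le)
      hence "coprime r t" using rp by (simp add: prime_imp_coprime)
      hence "gcd t r = 1" by (simp add: coprime_iff_gcd_eq_1 gcd.commute)
      then obtain u v where uv: "t * u = r * v + 1" using bezout_nat[of t r] False by auto
      have "(z^^t) w = w" using w zk by simp
      hence "((z^^t)^^u) w = w" by (rule funpow_fix)
      hence "(z^^(t * u)) w = w" by (simp add: funpow_mult)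
      moreover have "z^^(t * u) = z"
      proof -
        have "z^^(t * u) = (z^^(r * v)) \<circ> (z^^1)" unfolding uv by (metis funpow_add)
        thus ?thesis using zrm by simp
      qed
      ultimately have "z w = w" by simp
      thus ?thesis using fix0 w(1) by blast
    qed
  qed
  show ?thesis using zG0 qs by blast
qed

theorem theorem4p1:
  fixes G :: "(('f::{finite,field}) ^ 'd \<Rightarrow> 'f ^ 'd) set"
  assumes "affine_perm_group G"
    and "two_transitive G"
    and "CARD('f ^ 'd) \<ge> 3"
  shows "\<exists>g\<in>G. quasi_semiregular g"
proof -
  have pg: "perm_group G" and agl: "G \<subseteq> AGL" using assms(1) unfolding affine_perm_group_def by auto
  have idG: "id \<in> G" and bijG: "\<And>g. g \<in> G \<Longrightarrow> bij g"
    and compG: "\<And>g h. g \<in> G \<Longrightarrow> h \<in> G \<Longrightarrow> g \<circ> h \<in> G"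
    and invG: "\<And>g. g \<in> G \<Longrightarrow> inv_into UNIV g \<in> G"
    using pg unfolding perm_group_def by auto
  define G0 where "G0 = {g\<in>G. g 0 = 0}"
  have lin: "g (x + y) = g x + g y \<and> g (c *s x) = c *s g x" if g: "g \<in> G0" for g x y c
  proof -
    have "g \<in> AGL" using g agl unfolding G0_def by auto
    then obtain A b where Ab: "\<forall>x. g x = (A::'f^'d^'d) *v x + b" unfolding AGL_def by blast
    have "g 0 = A *v 0 + b" using Ab by blast
    hence "b = 0" using g unfolding G0_def by simp
    hence gx: "\<And>x. g x = A *v x" using Ab by simp
    show ?thesis unfolding gx by (simp add: matrix_vector_right_distrib vector_scalar_commute)
  qed
  have "\<exists>z\<in>G0. quasi_semiregular z"
  proof (rule main_linear)
    show "id \<in> G0" using idG unfolding G0_def by simp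
    show "\<And>g. g \<in> G0 \<Longrightarrow> bij g" using bijG unfolding G0_def by simp
    show "\<And>g h. g \<in> G0 \<Longrightarrow> h \<in> G0 \<Longrightarrow> g \<circ> h \<in> G0" using compG unfolding G0_def by simp
    show "\<And>g. g \<in> G0 \<Longrightarrow> inv_into UNIV g \<in> G0"
    proof -
      fix g assume g: "g \<in> G0"
      hence "inv_into UNIV g 0 = 0" unfolding G0_def using bijG by (simp add: bij_is_inj inv_f_eq)
      thus "inv_into UNIV g \<in> G0" using invG g unfolding G0_def by simp
    qed
    show "\<And>g x y. g \<in> G0 \<Longrightarrow> g (x + y) = g x + g y" using lin by blast
    show "\<And>g c x. g \<in> G0 \<Longrightarrow> g (c *s x) = c *s g x" using lin by blast
    show "\<And>v w. v \<noteq> 0 \<Longrightarrow> w \<noteq> 0 \<Longrightarrow> \<exists>g\<in>G0. g v = w"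
    proof -
      fix v w :: "'f^'d" assume "v \<noteq> 0" "w \<noteq> 0"
      then obtain g where "g \<in> G" "g 0 = 0" "g v = w"
        using assms(2) unfolding two_transitive_def by (metis (no_types))
      thus "\<exists>g\<in>G0. g v = w" unfolding G0_def by blast
    qed
    show "CARD('f^'d) \<ge> 3" by (rule assms(3))
  qed
  thus ?thesis unfolding G0_def by blast
qed

end
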